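(* Let $G$ be a directed graph with vertices $s,t$, let $k\ge1$, and let $C\in U^k$ satisfy $d_{\mathrm{sum}}(C)=\max_{S\in U^k}d_{\mathrm{sum}}(S)$. Then there exists $C'\in U^k_{\mathrm{lr}}$ such that $d_{\mathrm{sum}}(C')=d_{\mathrm{sum}}(C)$.
   Context: An $s$-$t$ cut of a directed graph $G$ is a set $X\subseteq E(G)$ such that removing $X$ leaves no directed $s$-$t$ path; $\Gamma_G(s,t)$ is the set of $s$-$t$ cuts of minimum cardinality. For $s$-$t$ cuts $X,Y$, write $X\le Y$ if every directed $s$-$t$ path in $G$ meets an edge of $X$ at or before an edge of $Y$. $U^k$ is the set of $k$-tuples $[X_1,\dots,X_k]$ of elements of $\Gamma_G(s,t)$ and $U^k_{\mathrm{lr}}$ the subset of those with $X_i\le X_j$ for all $i<j$. $d_{\mathrm{sum}}(X_1,\dots,X_k)=\sum_{1\le i<j\le k}|X_i\triangle X_j|$ with $\triangle$ the symmetric difference. *)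

theory Defs
  imports Main "Graph_Theory.Digraph" "Graph_Theory.Arc_Walk"
begin

definition st_cut :: "('a,'b) pre_digraph \<Rightarrow> 'a \<Rightarrow> 'a \<Rightarrow> 'b set \<Rightarrow> bool" where
  "st_cut G s t X \<longleftrightarrow> X \<subseteq> arcs G \<and>
     (\<forall>p. pre_digraph.apath G s p t \<longrightarrow> set p \<inter> X \<noteq> {})"

definition min_st_cuts :: "('a,'b) pre_digraph \<Rightarrow> 'a \<Rightarrow> 'a \<Rightarrow> 'b set set" where
  "min_st_cuts G s t = {X. st_cut G s t X \<and> (\<forall>Y. st_cut G s t Y \<longrightarrow> card X \<le> card Y)}"

definition cut_le :: "('a,'b) pre_digraph \<Rightarrow> 'a \<Rightarrow> 'a \<Rightarrow> 'b set \<Rightarrow> 'b set \<Rightarrow> bool" where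
  "cut_le G s t X Y \<longleftrightarrow> (\<forall>p. pre_digraph.apath G s p t \<longrightarrow>
      (\<exists>i < length p. p ! i \<in> X \<and> (\<forall>j < i. p ! j \<notin> Y)))"

definition U :: "('a,'b) pre_digraph \<Rightarrow> 'a \<Rightarrow> 'a \<Rightarrow> nat \<Rightarrow> 'b set list set" where
  "U G s t k = {C. length C = k \<and> set C \<subseteq> min_st_cuts G s t}"

definition U_lr :: "('a,'b) pre_digraph \<Rightarrow> 'a \<Rightarrow> 'a \<Rightarrow> nat \<Rightarrow> 'b set list set" where
  "U_lr G s t k = {C \<in> U G s t k. \<forall>i j. i < j \<and> j < k \<longrightarrow> cut_le G s t (C ! i) (C ! j)}"

definition sym_diff :: "'b set \<Rightarrow> 'b set \<Rightarrow> 'b set" where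
  "sym_diff A B = (A - B) \<union> (B - A)"

definition d_sum :: "'b set list \<Rightarrow> nat" where
  "d_sum C = (\<Sum>j<length C. \<Sum>i<j. card (sym_diff (C ! i) (C ! j)))"

end

theory Submission
  imports Defs
begin

lemma tri_sum:
  fixes f :: "nat \<Rightarrow> nat \<Rightarrow> int"
  assumes "\<And>i. f i i = 0" "\<And>i j. f i j = f j i"
  shows "2 * (\<Sum>j<n. \<Sum>i<j. f i j) = (\<Sum>j<n. \<Sum>i<n. f i j)"
proof (induction n)
  case 0 then show ?case by simp
next
  case (Suc n)
  have "(\<Sum>j<Suc n. \<Sum>i<Suc n. f i j) = (\<Sum>j<n. \<Sum>i<n. f i j) + (\<Sum>j<n. f n j) + (\<Sum>i<n. f i n)"
    using assms(1) by (simp add: sum.distrib)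
  also have "(\<Sum>j<n. f n j) = (\<Sum>i<n. f i n)" using assms(2) by simp
  finally show ?case using Suc by simp
qed

lemma card_ind:
  fixes k :: nat
  shows "int (card {i. i < k \<and> P i}) = (\<Sum>i<k. if P i then 1 else 0)"
proof -
  have "{i. i < k \<and> P i} = {..<k} \<inter> {i. P i}" by auto
  then show ?thesis by (simp add: sum.If_cases)
qed

lemma card_ind_set:
  assumes "finite A" "X \<subseteq> A"
  shows "int (card X) = (\<Sum>e\<in>A. if e \<in> X then 1 else 0)"
proof -
  have "A \<inter> X = X" using assms by auto
  then show ?thesis using sum.inter_restrict[OF assms(1), of "\<lambda>_. 1::int" X] by simp
qed

lemma quad:
  fixes b :: "nat \<Rightarrow> int"
  shows "(\<Sum>j<k. \<Sum>i<k. b i + b j - 2 * b i * b j) = 2 * int k * (\<Sum>i<k. b i) - 2 * (\<Sum>i<k. b i)^2"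
proof -
  have "(\<Sum>j<k. \<Sum>i<k. b i + b j - 2 * b i * b j)
     = (\<Sum>j<k. \<Sum>i<k. b i) + (\<Sum>j<k. \<Sum>i<k. b j) - 2 * (\<Sum>j<k. \<Sum>i<k. b i * b j)"
    by (simp add: sum.distrib sum_subtractf sum_distrib_left mult.assoc)
  also have "(\<Sum>j<k. \<Sum>i<k. b i * b j) = (\<Sum>i<k. b i)^2"
    unfolding power2_eq_square sum_product by (rule sum.swap)
  finally show ?thesis by (simp add: sum_distrib_left mult.assoc)
qed

lemma dsum_formula:
  fixes D :: "'b set list"
  assumes "finite A" "\<forall>i<length D. D ! i \<subseteq> A"
  shows "2 * int (d_sum D) = (\<Sum>e\<in>A. 2 * int (length D) * int (card {i. i < length D \<and> e \<in> D ! i})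
            - 2 * (int (card {i. i < length D \<and> e \<in> D ! i}))^2)"
proof -
  define k where "k = length D"
  define a where "a = (\<lambda>i e. if e \<in> D ! i then 1 else (0::int))"
  have sd: "int (card (sym_diff (D!i) (D!j))) = (\<Sum>e\<in>A. a i e + a j e - 2 * a i e * a j e)"
    if "i < k" "j < k" for i j
  proof -
    have "sym_diff (D!i) (D!j) \<subseteq> A" using assms that unfolding sym_diff_def k_def by auto
    then have "int (card (sym_diff (D!i) (D!j))) = (\<Sum>e\<in>A. if e \<in> sym_diff (D!i) (D!j) then 1 else 0)"
      using card_ind_set[OF assms(1)] by blast
    also have "\<dots> = (\<Sum>e\<in>A. a i e + a j e - 2 * a i e * a j e)"
      by (rule sum.cong) (auto simp: a_def sym_diff_def)
    finally show ?thesis .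
  qed
  have "2 * int (d_sum D) = 2 * (\<Sum>j<k. \<Sum>i<j. int (card (sym_diff (D!i) (D!j))))"
    by (simp add: d_sum_def k_def)
  also have "\<dots> = (\<Sum>j<k. \<Sum>i<k. int (card (sym_diff (D!i) (D!j))))"
    by (rule tri_sum) (auto simp: sym_diff_def Un_commute)
  also have "\<dots> = (\<Sum>j<k. \<Sum>i<k. \<Sum>e\<in>A. a i e + a j e - 2 * a i e * a j e)"
    using sd by simp
  also have "\<dots> = (\<Sum>e\<in>A. \<Sum>j<k. \<Sum>i<k. a i e + a j e - 2 * a i e * a j e)"
    apply (subst sum.swap)
    apply (rule sum.swap)
    done
  also have "\<dots> = (\<Sum>e\<in>A. 2 * int k * (\<Sum>i<k. a i e) - 2 * (\<Sum>i<k. a i e)^2)"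
    by (rule sum.cong[OF refl], rule quad)
  also have "\<dots> = (\<Sum>e\<in>A. 2 * int k * int (card {i. i < k \<and> e \<in> D ! i})
            - 2 * (int (card {i. i < k \<and> e \<in> D ! i}))^2)"
    by (simp add: card_ind a_def)
  finally show ?thesis by (simp add: k_def)
qed

lemma dsum_eq:
  assumes "finite A" "length D = length D'" "\<forall>i<length D. D ! i \<subseteq> A" "\<forall>i<length D'. D' ! i \<subseteq> A"
    and "\<forall>e\<in>A. card {i. i < length D \<and> e \<in> D ! i} = card {i. i < length D \<and> e \<in> D' ! i}"
  shows "d_sum D = d_sum D'"
proof -
  have "2 * int (d_sum D) = 2 * int (d_sum D')"
    unfolding dsum_formula[OF assms(1,3)] dsum_formula[OF assms(1,4)]
    using assms(2,5) by (intro sum.cong) auto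
  then show ?thesis by simp
qed

definition dout :: "('a,'b) pre_digraph \<Rightarrow> 'a set \<Rightarrow> 'b set" where
  "dout G T = {e \<in> arcs G. tail G e \<in> T \<and> head G e \<notin> T}"

lemma (in wf_digraph) exit_arc:
  assumes "awalk u p v" "u \<in> T" "v \<notin> T"
  shows "\<exists>i<length p. tail G (p!i) \<in> T \<and> head G (p!i) \<notin> T \<and> (\<forall>j<i. head G (p!j) \<in> T)"
  using assms
proof (induction p arbitrary: u)
  case Nil
  then show ?case by (auto simp: awalk_def)
next
  case (Cons e es)
  then have e: "e \<in> arcs G" "u = tail G e" "awalk (head G e) es v" by (auto simp: awalk_Cons_iff)
  show ?case
  proof (cases "head G e \<in> T")
    case False
    then show ?thesis using e Cons.prems(2) by (intro exI[of _ 0]) auto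
  next
    case True
    from Cons.IH[OF e(3) True Cons.prems(3)] obtain i where
      i: "i < length es" "tail G (es!i) \<in> T" "head G (es!i) \<notin> T" "\<forall>j<i. head G (es!j) \<in> T" by blast
    have "\<forall>j<Suc i. head G ((e#es)!j) \<in> T"
      using i(4) True by (auto simp: less_Suc_eq_0_disj)
    then show ?thesis using i by (intro exI[of _ "Suc i"]) auto
  qed
qed

lemma dout_cut:
  assumes "wf_digraph G" "s \<in> T" "t \<notin> T"
  shows "st_cut G s t (dout G T)"
  unfolding st_cut_def
proof safe
  show "x \<in> arcs G" if "x \<in> dout G T" for x using that by (auto simp: dout_def)
next
  fix p x assume p: "pre_digraph.apath G s p t" and "set p \<inter> dout G T = {}"
  have w: "pre_digraph.awalk G s p t" using p by (simp add: pre_digraph.awalkI_apath)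
  from wf_digraph.exit_arc[OF assms(1) w assms(2,3)] obtain i where
    "i<length p" "tail G (p!i) \<in> T" "head G (p!i) \<notin> T" by blast
  moreover have "p!i \<in> arcs G" using w \<open>i<length p\<close> by (auto simp: pre_digraph.awalk_def)
  ultimately have "p!i \<in> set p \<inter> dout G T" by (auto simp: dout_def)
  then show False using \<open>set p \<inter> dout G T = {}\<close> by blast
qed

lemma dout_le:
  assumes "wf_digraph G" "s \<in> T" "t \<notin> T" "T \<subseteq> T'"
  shows "cut_le G s t (dout G T) (dout G T')"
  unfolding cut_le_def
proof safe
  fix p assume p: "pre_digraph.apath G s p t"
  have w: "pre_digraph.awalk G s p t" using p by (simp add: pre_digraph.awalkI_apath)
  from wf_digraph.exit_arc[OF assms(1) w assms(2,3)] obtain i where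
    i: "i<length p" "tail G (p!i) \<in> T" "head G (p!i) \<notin> T" "\<forall>j<i. head G (p!j) \<in> T" by blast
  moreover have "p!i \<in> arcs G" using w \<open>i<length p\<close> by (auto simp: pre_digraph.awalk_def)
  ultimately show "\<exists>i<length p. p ! i \<in> dout G T \<and> (\<forall>j<i. p ! j \<notin> dout G T')"
    using assms(4) by (intro exI[of _ i]) (auto simp: dout_def)
qed

lemma (in fin_digraph) min_cut_dout:
  assumes "X \<in> min_st_cuts G s t" "s \<in> verts G"
  shows "\<exists>R. s \<in> R \<and> t \<notin> R \<and> X = dout G R"
proof -
  define R where "R = {v. \<exists>p. awalk s p v \<and> set p \<inter> X = {}}"
  have cut: "st_cut G s t X" and mn: "\<And>Y. st_cut G s t Y \<Longrightarrow> card X \<le> card Y"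
    using assms(1) by (auto simp: min_st_cuts_def)
  have sR: "s \<in> R" unfolding R_def using assms(2) by (intro CollectI exI[of _ "[]"]) (auto simp: awalk_Nil_iff)
  have tR: "t \<notin> R"
  proof
    assume "t \<in> R"
    then obtain p where p: "awalk s p t" "set p \<inter> X = {}" by (auto simp: R_def)
    have "apath s (awalk_to_apath p) t" using p(1) by (rule apath_awalk_to_apath)
    moreover have "set (awalk_to_apath p) \<subseteq> set p" using p(1) by (rule awalk_to_apath_subset)
    ultimately show False using cut p(2) unfolding st_cut_def by blast
  qed
  have sub: "dout G R \<subseteq> X"
  proof
    fix e assume e: "e \<in> dout G R"
    then have ea: "e \<in> arcs G" "tail G e \<in> R" "head G e \<notin> R" by (auto simp: dout_def)
    then obtain p where p: "awalk s p (tail G e)" "set p \<inter> X = {}" by (auto simp: R_def)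
    show "e \<in> X"
    proof (rule ccontr)
      assume "e \<notin> X"
      have "awalk s (p @ [e]) (head G e)"
        using awalk_appendI[OF p(1) arc_implies_awalk[OF ea(1)]] .
      moreover have "set (p @ [e]) \<inter> X = {}" using p(2) \<open>e \<notin> X\<close> by auto
      ultimately have "head G e \<in> R" unfolding R_def by blast
      then show False using ea(3) by blast
    qed
  qed
  have "finite X" using cut finite_arcs unfolding st_cut_def by (blast intro: finite_subset)
  moreover have "card X \<le> card (dout G R)" using mn[OF dout_cut[OF wf_digraph_axioms sR tR]] .
  ultimately have "X = dout G R" using sub by (metis card_seteq)
  then show ?thesis using sR tR by blast
qed


lemma sum_cnt:
  assumes "finite A" "\<forall>i<k. D ! i \<subseteq> A"
  shows "(\<Sum>e\<in>A. card {i. i < k \<and> e \<in> D ! i}) = (\<Sum>i<k. card (D ! i))"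
proof -
  have "int (\<Sum>e\<in>A. card {i. i < k \<and> e \<in> D ! i}) = (\<Sum>e\<in>A. \<Sum>i<k. if e \<in> D ! i then 1 else 0)"
    by (simp add: of_nat_sum card_ind)
  also have "\<dots> = (\<Sum>i<k. \<Sum>e\<in>A. if e \<in> D ! i then 1 else 0)" by (rule sum.swap)
  also have "\<dots> = (\<Sum>i<k. int (card (D ! i)))"
    using card_ind_set[OF assms(1)] assms(2) by simp
  finally have "int (\<Sum>e\<in>A. card {i. i < k \<and> e \<in> D ! i}) = int (\<Sum>i<k. card (D ! i))"
    by simp
  then show ?thesis by (simp only: of_nat_eq_iff)
qed

theorem corollary1:
  fixes G :: "('a,'b) pre_digraph" and s t :: 'a and k :: nat and C :: "'b set list"
  assumes "fin_digraph G"
    and "s \<in> verts G" and "t \<in> verts G"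
    and "k \<ge> 1"
    and "C \<in> U G s t k"
    and "\<forall>S \<in> U G s t k. d_sum S \<le> d_sum C"
  shows "\<exists>C' \<in> U_lr G s t k. d_sum C' = d_sum C"
proof -
  interpret fin_digraph G by fact
  have wf: "wf_digraph G" by (rule wf_digraph_axioms)
  have lenC: "length C = k" and Cmin: "\<forall>j<k. C!j \<in> min_st_cuts G s t"
    using assms(5) by (auto simp: U_def)
  have "\<forall>j\<in>{..<k}. \<exists>R. s \<in> R \<and> t \<notin> R \<and> C!j = dout G R"
  proof
    fix j assume "j \<in> {..<k}"
    then have "C!j \<in> min_st_cuts G s t" using Cmin by simp
    from min_cut_dout[OF this assms(2)] show "\<exists>R. s \<in> R \<and> t \<notin> R \<and> C!j = dout G R" .
  qed
  from bchoice[OF this] obtain S where S0: "\<forall>j\<in>{..<k}. s \<in> S j \<and> t \<notin> S j \<and> C!j = dout G (S j)"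
    by blast
  have S: "\<forall>j<k. s \<in> S j \<and> t \<notin> S j \<and> C!j = dout G (S j)" using S0 by simp
  define lam where "lam = card (C!0)"
  have k0: "0 < k" using assms(4) by simp
  have C0: "C!0 \<in> min_st_cuts G s t" using Cmin k0 by simp
  have lamle: "\<And>Y. st_cut G s t Y \<Longrightarrow> lam \<le> card Y"
    using C0 unfolding min_st_cuts_def lam_def by blast
  have cardC: "\<forall>j<k. card (C!j) = lam"
  proof safe
    fix j assume "j < k"
    then have "C!j \<in> min_st_cuts G s t" "C!0 \<in> min_st_cuts G s t" using Cmin k0 by auto
    then show "card (C!j) = lam" unfolding lam_def min_st_cuts_def by (auto intro: antisym)
  qed
  have Carcs: "\<forall>j<k. C!j \<subseteq> arcs G" using Cmin by (auto simp: min_st_cuts_def st_cut_def)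
  define n where "n v = card {j. j<k \<and> v \<in> S j}" for v
  define T where "T i = {v. k - i \<le> n v}" for i
  define C' where "C' = map (\<lambda>i. dout G (T i)) [0..<k]"
  have lenC': "length C' = k" by (simp add: C'_def)
  have C'nth: "\<And>i. i < k \<Longrightarrow> C'!i = dout G (T i)" by (simp add: C'_def)
  have C'arcs: "\<forall>j<k. C'!j \<subseteq> arcs G" by (auto simp: C'nth dout_def)
  have nk: "n v \<le> k" for v
  proof -
    have "{j. j<k \<and> v \<in> S j} \<subseteq> {..<k}" by auto
    then show ?thesis unfolding n_def by (metis card_lessThan card_mono finite_lessThan)
  qed
  have ns: "n s = k"
  proof -
    have "{j. j<k \<and> s \<in> S j} = {..<k}" using S by auto
    then show ?thesis by (simp add: n_def)
  qed
  have nt: "n t = 0"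
  proof -
    have "{j. j<k \<and> t \<in> S j} = {}" using S by auto
    then show ?thesis by (simp add: n_def)
  qed
  have sT: "s \<in> T i" for i using ns by (simp add: T_def)
  have tT: "i < k \<Longrightarrow> t \<notin> T i" for i using nt by (simp add: T_def)
  have Tmono: "i \<le> j \<Longrightarrow> T i \<subseteq> T j" for i j by (auto simp: T_def)
  define cnt where "cnt D e = card {i. i<k \<and> e \<in> D!i}" for D :: "'b set list" and e
  have cnt': "cnt C' e = n (tail G e) - n (head G e)" if e: "e \<in> arcs G" for e
  proof -
    have "{i. i<k \<and> e \<in> C'!i} = {i. i<k \<and> k - i \<le> n (tail G e) \<and> \<not> k - i \<le> n (head G e)}"
      using e by (auto simp: C'nth dout_def T_def)
    also have "\<dots> = {k - n (tail G e)..<k - n (head G e)}"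
      using nk[of "tail G e"] nk[of "head G e"] by auto
    finally show ?thesis using nk[of "tail G e"] nk[of "head G e"] by (simp add: cnt_def)
  qed
  have cntC: "n (tail G e) - n (head G e) \<le> cnt C e" if e: "e \<in> arcs G" for e
  proof -
    have "{j. j<k \<and> tail G e \<in> S j} \<subseteq> {j. j<k \<and> e \<in> C!j} \<union> {j. j<k \<and> head G e \<in> S j}"
      using S e by (auto simp: dout_def)
    then have "n (tail G e) \<le> card ({j. j<k \<and> e \<in> C!j} \<union> {j. j<k \<and> head G e \<in> S j})"
      unfolding n_def by (rule card_mono[rotated]) auto
    also have "\<dots> \<le> cnt C e + n (head G e)" unfolding cnt_def n_def by (rule card_Un_le)
    finally show ?thesis by simp
  qed
  have le1: "\<forall>e\<in>arcs G. cnt C' e \<le> cnt C e" using cnt' cntC by simp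
  have S2: "(\<Sum>e\<in>arcs G. cnt C e) = k * lam"
    using sum_cnt[OF finite_arcs Carcs] cardC by (simp add: cnt_def)
  have S2': "(\<Sum>e\<in>arcs G. cnt C' e) = (\<Sum>i<k. card (C'!i))"
    using sum_cnt[OF finite_arcs C'arcs] by (simp add: cnt_def)
  have geC': "\<forall>i<k. lam \<le> card (C'!i)"
    using lamle dout_cut[OF wf sT tT] by (simp add: C'nth)
  have S3: "k * lam \<le> (\<Sum>i<k. card (C'!i))"
    using sum_mono[of "{..<k}" "\<lambda>_. lam" "\<lambda>i. card (C'!i)"] geC' by simp
  have S1: "(\<Sum>e\<in>arcs G. cnt C' e) \<le> (\<Sum>e\<in>arcs G. cnt C e)" using le1 by (intro sum_mono) auto
  have eqcnt: "\<forall>e\<in>arcs G. cnt C' e = cnt C e"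
  proof (rule ccontr)
    assume "\<not> ?thesis"
    then have "\<exists>e\<in>arcs G. cnt C' e < cnt C e" using le1 by force
    then have "(\<Sum>e\<in>arcs G. cnt C' e) < (\<Sum>e\<in>arcs G. cnt C e)"
      using le1 by (intro sum_strict_mono_ex1) auto
    then show False using S2 S2' S3 by simp
  qed
  have cardC': "\<forall>i<k. card (C'!i) = lam"
  proof (rule ccontr)
    assume "\<not> ?thesis"
    then have "\<exists>i\<in>{..<k}. lam < card (C'!i)" using geC' by force
    then have "(\<Sum>i<k. lam) < (\<Sum>i<k. card (C'!i))"
      using geC' by (intro sum_strict_mono_ex1) auto
    then show False using S1 S2 S2' by simp
  qed
  have C'min: "\<forall>i<k. C'!i \<in> min_st_cuts G s t"
    using cardC' lamle dout_cut[OF wf sT tT] by (auto simp: min_st_cuts_def C'nth)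
  have "C' \<in> U G s t k" using C'min lenC' by (auto simp: U_def in_set_conv_nth)
  moreover have "\<forall>i j. i < j \<and> j < k \<longrightarrow> cut_le G s t (C' ! i) (C' ! j)"
    using dout_le[OF wf sT tT Tmono] by (auto simp: C'nth)
  ultimately have inlr: "C' \<in> U_lr G s t k" by (simp add: U_lr_def)
  have "d_sum C = d_sum C'"
    using eqcnt by (intro dsum_eq[OF finite_arcs]) (auto simp: lenC lenC' Carcs C'arcs cnt_def)
  then show ?thesis using inlr by metis
qed

end
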